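(* Let $m\ge0$ and $n\ge0$ be integers. Then the polynomial $\sum_{j=0}^n(-1)^jq^{mj}\begin{bmatrix} n\\ j\end{bmatrix}_{q^2}$ is divisible by $(q;q^2)_{\lfloor (n+1)/2\rfloor}$ in $\mathbb{Z}[q]$.
   Context: $q$ is an indeterminate. $(x;q)_n=\prod_{j=0}^{n-1}(1-q^jx)$. The Gaussian binomial coefficient is $\begin{bmatrix} n\\ j\end{bmatrix}_q=\frac{(q;q)_n}{(q;q)_j(q;q)_{n-j}}$ for $0\le j\le n$ (a polynomial in $q$), and $\begin{bmatrix} n\\ j\end{bmatrix}_{q^2}$ is this with $q$ replaced by $q^2$. *)

theory Defs
  imports "HOL-Computational_Algebra.Polynomial"
begin

definition qvar :: "int poly" where "qvar = [:0, 1:]"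

definition qpoch :: "int poly \<Rightarrow> int poly \<Rightarrow> nat \<Rightarrow> int poly" where
  "qpoch x b n = (\<Prod>j<n. 1 - b ^ j * x)"

text \<open>Gaussian binomial coefficient [n,j]_q = (q;q)_n / ((q;q)_j (q;q)_(n-j)),
  an (exact) quotient in Z[q].\<close>
definition qbinom :: "nat \<Rightarrow> nat \<Rightarrow> int poly" where
  "qbinom n j = qpoch qvar qvar n div (qpoch qvar qvar j * qpoch qvar qvar (n - j))"

definition qbinom2 :: "nat \<Rightarrow> nat \<Rightarrow> int poly" where
  "qbinom2 n j = pcompose (qbinom n j) (qvar ^ 2)"

end

theory Submission
  imports Defs
begin

fun gb :: "int poly \<Rightarrow> nat \<Rightarrow> nat \<Rightarrow> int poly" where
  "gb Q 0 k = (if k = 0 then 1 else 0)"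
| "gb Q (Suc n) 0 = 1"
| "gb Q (Suc n) (Suc k) = gb Q n k + Q ^ Suc k * gb Q n (Suc k)"

definition PP :: "int poly \<Rightarrow> nat \<Rightarrow> int poly" where
  "PP Q j = (\<Prod>i<j. 1 - Q ^ Suc i)"

lemma PP_Suc: "PP Q (Suc j) = PP Q j * (1 - Q ^ Suc j)"
  by (simp add: PP_def)

lemma gb_zero: "n < k \<Longrightarrow> gb Q n k = 0"
proof (induction n arbitrary: k)
  case 0 then show ?case by simp
next
  case (Suc n) then show ?case by (cases k) auto
qed

lemma gb_prod: "k \<le> n \<Longrightarrow> gb Q n k * (PP Q k * PP Q (n - k)) = PP Q n"
proof (induction n arbitrary: k)
  case 0 then show ?case by (simp add: PP_def)
next
  case (Suc n)
  show ?case
  proof (cases k)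
    case 0 then show ?thesis by (simp add: PP_def)
  next
    case (Suc k')
    have k': "k' \<le> n" using Suc.prems Suc by simp
    have A: "gb Q n k' * (PP Q (Suc k') * PP Q (n - k')) = PP Q n * (1 - Q ^ Suc k')"
      using Suc.IH[OF k'] by (simp add: PP_Suc algebra_simps)
    show ?thesis
    proof (cases "k' = n")
      case True
      then show ?thesis using A Suc by (simp add: gb_zero PP_Suc)
    next
      case False
      then have k2: "Suc k' \<le> n" using k' by simp
      have nk: "n - k' = Suc (n - Suc k')" using k2 by simp
      have B: "Q ^ Suc k' * gb Q n (Suc k') * (PP Q (Suc k') * PP Q (n - k'))
          = PP Q n * (Q ^ Suc k' * (1 - Q ^ (n - k')))"
      proof -
        have "Q ^ Suc k' * gb Q n (Suc k') * (PP Q (Suc k') * PP Q (n - k'))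
          = Q ^ Suc k' * (1 - Q ^ (n - k')) * (gb Q n (Suc k') * (PP Q (Suc k') * PP Q (n - Suc k')))"
          unfolding nk PP_Suc[of Q "n - Suc k'"] by (simp add: algebra_simps)
        also have "\<dots> = Q ^ Suc k' * (1 - Q ^ (n - k')) * PP Q n"
          using Suc.IH[OF k2] by simp
        finally show ?thesis by (simp add: algebra_simps)
      qed
      have "gb Q (Suc n) k * (PP Q k * PP Q (Suc n - k))
          = PP Q n * (1 - Q ^ Suc k') + PP Q n * (Q ^ Suc k' * (1 - Q ^ (n - k')))"
        using A B Suc by (simp add: algebra_simps)
      also have "\<dots> = PP Q n * (1 - Q ^ Suc k' * Q ^ (n - k'))"
        by (simp add: algebra_simps)
      also have "Q ^ Suc k' * Q ^ (n - k') = Q ^ Suc n"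
        using k' by (simp flip: power_add)
      finally show ?thesis by (simp add: PP_Suc)
    qed
  qed
qed

lemma PP_nz: "(\<And>i. 1 - Q ^ Suc i \<noteq> 0) \<Longrightarrow> PP Q j \<noteq> 0"
  unfolding PP_def by (simp add: prod_zero_iff)

lemma gb_absorb:
  assumes nz: "\<And>i. 1 - Q ^ Suc i \<noteq> 0"
  shows "(1 - Q ^ Suc k) * gb Q (Suc n) (Suc k) = (1 - Q ^ Suc n) * gb Q n k"
proof (cases "k \<le> n")
  case False
  then show ?thesis by (simp add: gb_zero)
next
  case True
  have X: "PP Q k * PP Q (n - k) \<noteq> 0" using PP_nz[OF nz] by simp
  have "(1 - Q ^ Suc k) * gb Q (Suc n) (Suc k) * (PP Q k * PP Q (n - k))
      = gb Q (Suc n) (Suc k) * (PP Q (Suc k) * PP Q (Suc n - Suc k))"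
    by (simp add: PP_Suc algebra_simps)
  also have "\<dots> = PP Q (Suc n)" using gb_prod[of "Suc k" "Suc n" Q] True by simp
  also have "\<dots> = (1 - Q ^ Suc n) * gb Q n k * (PP Q k * PP Q (n - k))"
    using gb_prod[OF True, of Q] by (simp add: PP_Suc algebra_simps)
  finally show ?thesis using X by simp
qed

lemma qvar_pow_nz: "e > 0 \<Longrightarrow> 1 - (qvar ^ e) ^ Suc i \<noteq> 0"
proof
  assume e: "e > 0" and h: "1 - (qvar ^ e) ^ Suc i = 0"
  have "poly (1 - (qvar ^ e) ^ Suc i) 2 = 0" using h by simp
  moreover have "poly (1 - (qvar ^ e) ^ Suc i) 2 = 1 - ((2::int) ^ e) ^ Suc i"
    by (simp add: qvar_def)
  moreover have "(1::int) < (2 ^ e) ^ Suc i"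
  proof -
    have "(1::int) < 2 ^ e" by (rule one_less_power) (simp_all add: e)
    then show ?thesis using one_less_power[of "(2::int)^e" "Suc i"] by simp
  qed
  ultimately show False by simp
qed

lemma pcompose_pow: "pcompose (p ^ k) r = (pcompose p r) ^ k"
  by (induction k) (simp_all add: pcompose_1 pcompose_mult)

lemma pcompose_qvar: "pcompose qvar r = r"
  by (simp add: qvar_def pcompose_pCons)

lemma qpoch_PP: "qpoch qvar qvar n = PP qvar n"
  unfolding qpoch_def PP_def by (simp add: mult.commute)

lemma pcompose_PP: "pcompose (PP qvar n) r = PP r n"
  unfolding PP_def by (simp add: pcompose_prod pcompose_diff pcompose_1 pcompose_pow pcompose_qvar pcompose_mult)

lemma qbinom2_gb:
  assumes "j \<le> n" shows "qbinom2 n j = gb (qvar ^ 2) n j"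
proof -
  have nz1: "\<And>i. 1 - qvar ^ Suc i \<noteq> 0" using qvar_pow_nz[of 1] by simp
  have nz2: "\<And>i. 1 - (qvar ^ 2) ^ Suc i \<noteq> 0" using qvar_pow_nz[of 2] by simp
  have X1: "PP qvar j * PP qvar (n - j) \<noteq> 0" using PP_nz[OF nz1] by simp
  have "qbinom n j = gb qvar n j * (PP qvar j * PP qvar (n - j)) div (PP qvar j * PP qvar (n - j))"
    unfolding qbinom_def qpoch_PP using gb_prod[OF assms, of qvar] by simp
  also have "\<dots> = gb qvar n j" using X1 by simp
  finally have qb: "qbinom n j = gb qvar n j" .
  have X2: "PP (qvar^2) j * PP (qvar^2) (n - j) \<noteq> 0" using PP_nz[OF nz2] by simp
  have "pcompose (gb qvar n j) (qvar^2) * (PP (qvar^2) j * PP (qvar^2) (n - j)) = PP (qvar^2) n"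
    using arg_cong[OF gb_prod[OF assms, of qvar], of "\<lambda>p. pcompose p (qvar^2)"]
    by (simp add: pcompose_mult pcompose_PP)
  also have "\<dots> = gb (qvar^2) n j * (PP (qvar^2) j * PP (qvar^2) (n - j))"
    using gb_prod[OF assms] by simp
  finally show ?thesis unfolding qbinom2_def qb using X2 by simp
qed

lemma gb_n0 [simp]: "gb Q n 0 = 1"
  by (cases n) simp_all

definition T :: "int poly \<Rightarrow> int poly \<Rightarrow> nat \<Rightarrow> int poly" where
  "T Q x n = (\<Sum>j\<le>n. (-1) ^ j * x ^ j * gb Q n j)"

lemma T_ext: "n \<le> N \<Longrightarrow> T Q x n = (\<Sum>j\<le>N. (-1) ^ j * x ^ j * gb Q n j)"
  unfolding T_def by (rule sum.mono_neutral_left) (auto simp: gb_zero)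

lemma T_rec1: "T Q x (Suc n) = T Q (Q * x) n - x * T Q x n"
proof -
  have "T Q x (Suc n) = 1 + (\<Sum>j\<le>n. (-1) ^ Suc j * x ^ Suc j * gb Q (Suc n) (Suc j))"
    unfolding T_def by (subst sum.atMost_Suc_shift) simp
  also have "\<dots> = 1 + (\<Sum>j\<le>n. (-1) ^ Suc j * (Q * x) ^ Suc j * gb Q n (Suc j))
      - x * (\<Sum>j\<le>n. (-1) ^ j * x ^ j * gb Q n j)"
    by (simp add: sum_distrib_left sum.distrib[symmetric] sum_subtractf[symmetric] algebra_simps
        power_mult_distrib)
  also have "1 + (\<Sum>j\<le>n. (-1) ^ Suc j * (Q * x) ^ Suc j * gb Q n (Suc j))
      = (\<Sum>j\<le>Suc n. (-1) ^ j * (Q * x) ^ j * gb Q n j)"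
    by (subst sum.atMost_Suc_shift) simp
  also have "\<dots> = T Q (Q * x) n" by (rule T_ext[symmetric]) simp
  finally show ?thesis unfolding T_def by simp
qed

lemma gb_coef:
  assumes nz: "\<And>i. 1 - Q ^ Suc i \<noteq> 0"
  shows "gb Q (Suc (Suc n)) (Suc j) = gb Q (Suc n) (Suc j) + gb Q (Suc n) j - (1 - Q ^ Suc n) * gb Q n j"
  using gb_absorb[OF nz, of j n] by (simp add: algebra_simps)

lemma T_rec2:
  assumes nz: "\<And>i. 1 - Q ^ Suc i \<noteq> 0"
  shows "T Q x (Suc (Suc n)) = (1 - x) * T Q x (Suc n) + x * (1 - Q ^ Suc n) * T Q x n"
proof -
  let ?A = "\<lambda>j. (-1) ^ Suc j * x ^ Suc j * gb Q (Suc n) (Suc j)"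
  let ?B = "\<lambda>j. (-1) ^ j * x ^ j * gb Q (Suc n) j"
  let ?C = "\<lambda>j. (-1) ^ j * x ^ j * gb Q n j"
  have "T Q x (Suc (Suc n)) = 1 + (\<Sum>j\<le>Suc n. (-1) ^ Suc j * x ^ Suc j * gb Q (Suc (Suc n)) (Suc j))"
    unfolding T_def by (subst sum.atMost_Suc_shift) simp
  also have "\<dots> = 1 + (\<Sum>j\<le>Suc n. ?A j - x * ?B j + x * (1 - Q ^ Suc n) * ?C j)"
    by (intro arg_cong[where f="\<lambda>s. 1 + s"] sum.cong refl) (simp only: gb_coef[OF nz], simp add: algebra_simps)
  also have "\<dots> = (1 + (\<Sum>j\<le>Suc n. ?A j)) - x * (\<Sum>j\<le>Suc n. ?B j) + x * (1 - Q ^ Suc n) * (\<Sum>j\<le>Suc n. ?C j)"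
    by (simp only: sum.distrib sum_subtractf sum_distrib_left)
  also have "1 + (\<Sum>j\<le>Suc n. ?A j) = T Q x (Suc n)"
  proof -
    have "1 + (\<Sum>j\<le>Suc n. ?A j) = (\<Sum>j\<le>Suc (Suc n). ?B j)"
      by (subst sum.atMost_Suc_shift) simp
    also have "\<dots> = T Q x (Suc n)" by (rule T_ext[symmetric]) simp
    finally show ?thesis .
  qed
  also have "(\<Sum>j\<le>Suc n. ?B j) = T Q x (Suc n)" unfolding T_def ..
  also have "(\<Sum>j\<le>Suc n. ?C j) = T Q x n" by (rule T_ext[symmetric]) simp
  finally show ?thesis by (simp add: algebra_simps)
qed

abbreviation "Q2 \<equiv> (qvar ^ 2 :: int poly)"

lemma nzQ2: "1 - Q2 ^ Suc i \<noteq> 0"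
  using qvar_pow_nz[of 2 i] by simp

definition Dk :: "nat \<Rightarrow> int poly" where "Dk k = qpoch qvar Q2 k"

lemma Dk_Suc: "Dk (Suc k) = Dk k * (1 - qvar ^ (2 * k + 1))"
  unfolding Dk_def qpoch_def by (simp add: power_mult[symmetric] power_add mult.commute)

lemma Dk_mono: "k \<le> l \<Longrightarrow> Dk k dvd Dk l"
  unfolding Dk_def qpoch_def by (rule prod_dvd_prod_subset) auto

lemma sq1: "(qvar ^ (2 * k + 1)) ^ 2 = Q2 ^ Suc (2 * k)"
  by (simp only: power_mult[symmetric]) (rule arg_cong[where f="\<lambda>e. qvar ^ e"], simp)

lemma sq2: "(qvar ^ (2 * k + 2)) ^ 2 = Q2 ^ Suc (Suc (2 * k))"
  by (simp only: power_mult[symmetric]) (rule arg_cong[where f="\<lambda>e. qvar ^ e"], simp)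

lemma T_zero: "T Q x 0 = 1" by (simp add: T_def)
lemma T_one: "T Q x (Suc 0) = 1 - x" by (simp add: T_def)

lemma case0: "T Q2 1 (2 * k + 1) = 0 \<and> Dk k dvd T Q2 1 (2 * k)"
proof (induction k)
  case 0 then show ?case by (simp add: T_one Dk_def qpoch_def)
next
  case (Suc k)
  have r1: "T Q2 1 (2 * Suc k + 1) = 0"
    using T_rec2[OF nzQ2, of 1 "Suc (2*k)"] Suc.IH by simp
  have r2: "T Q2 1 (2 * Suc k) = (1 - Q2 ^ Suc (2 * k)) * T Q2 1 (2 * k)"
    using T_rec2[OF nzQ2, of 1 "2*k"] by simp
  have "1 - Q2 ^ Suc (2 * k) = (1 - qvar ^ (2 * k + 1)) * (1 + qvar ^ (2 * k + 1))"
    unfolding sq1[symmetric] by (simp add: algebra_simps power2_eq_square)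
  then have "Dk (Suc k) dvd (1 - Q2 ^ Suc (2 * k)) * T Q2 1 (2 * k)"
    unfolding Dk_Suc using Suc.IH by (simp add: mult_dvd_mono)
  with r1 r2 show ?case by simp
qed

definition E :: "nat \<Rightarrow> int poly" where "E k = (\<Prod>i<k. 1 + qvar ^ (2 * i + 2))"

lemma E_Suc: "E (Suc k) = E k * (1 + qvar ^ (2 * k + 2))"
  by (simp add: E_def)

lemma case1: "T Q2 qvar (2 * k) = Dk k * E k \<and> T Q2 qvar (2 * k + 1) = Dk (Suc k) * E k"
proof (induction k)
  case 0 then show ?case by (simp add: T_one T_zero Dk_def qpoch_def E_def)
next
  case (Suc k)
  define y :: "int poly" where "y = qvar ^ (2 * k + 1)"
  define z :: "int poly" where "z = qvar ^ (2 * k + 2)"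
  have zy: "z = qvar * y" unfolding y_def z_def by simp
  have a: "T Q2 qvar (2 * Suc k) = Dk (Suc k) * E (Suc k)"
  proof -
    have "T Q2 qvar (2 * Suc k) = (1 - qvar) * T Q2 qvar (Suc (2 * k))
        + qvar * (1 - Q2 ^ Suc (2 * k)) * T Q2 qvar (2 * k)"
      using T_rec2[OF nzQ2, of qvar "2*k"] by simp
    also have "\<dots> = (1 - qvar) * (Dk k * (1 - y) * E k) + qvar * (1 - y ^ 2) * (Dk k * E k)"
      using Suc.IH unfolding sq1[symmetric] y_def Dk_Suc by simp
    also have "\<dots> = Dk k * (1 - y) * (E k * (1 + z))"
      unfolding zy by (simp add: algebra_simps power2_eq_square)
    finally show ?thesis unfolding Dk_Suc E_Suc y_def z_def by simp
  qed
  have b: "T Q2 qvar (2 * Suc k + 1) = Dk (Suc (Suc k)) * E (Suc k)"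
  proof -
    have "T Q2 qvar (2 * Suc k + 1) = (1 - qvar) * T Q2 qvar (2 * Suc k)
        + qvar * (1 - Q2 ^ Suc (Suc (2 * k))) * T Q2 qvar (Suc (2 * k))"
      using T_rec2[OF nzQ2, of qvar "Suc (2*k)"] by simp
    also have "\<dots> = (1 - qvar) * (Dk (Suc k) * (E k * (1 + z))) + qvar * (1 - z ^ 2) * (Dk (Suc k) * E k)"
      using Suc.IH a unfolding sq2[symmetric] z_def E_Suc by simp
    also have "\<dots> = Dk (Suc k) * (1 - qvar * z) * (E k * (1 + z))"
      by (simp add: algebra_simps power2_eq_square)
    also have "qvar * z = qvar ^ (2 * Suc k + 1)" unfolding z_def by simp
    finally show ?thesis unfolding Dk_Suc[of "Suc k"] E_Suc z_def by (simp add: mult.assoc)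
  qed
  from a b show ?case by simp
qed

definition DD :: "nat \<Rightarrow> int poly" where "DD n = qpoch qvar Q2 ((n + 1) div 2)"

lemma DD_mono: "DD n dvd DD (Suc n)"
  unfolding DD_def Dk_def[symmetric] by (rule Dk_mono) simp

lemma main: "DD n dvd T Q2 (qvar ^ m) n"
proof (induction m arbitrary: n rule: less_induct)
  case (less m)
  have "\<exists>k. n = 2 * k \<or> n = 2 * k + 1" by presburger
  then obtain k where k: "n = 2 * k \<or> n = 2 * k + 1" by blast
  have DDk: "n = 2 * k \<Longrightarrow> DD n = Dk k" "n = 2 * k + 1 \<Longrightarrow> DD n = Dk (Suc k)"
    unfolding DD_def Dk_def by simp_all
  show ?case
  proof (cases m)
    case 0
    then show ?thesis using k case0[of k] DDk by auto
  next
    case (Suc m')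
    show ?thesis
    proof (cases m')
      case 0
      then show ?thesis using k case1[of k] DDk Suc by auto
    next
      case (Suc m'')
      have m: "m = Suc (Suc m'')" using Suc \<open>m = Suc m'\<close> by simp
      have qm: "qvar ^ m = Q2 * qvar ^ m''" unfolding m by (simp add: power2_eq_square)
      have "T Q2 (qvar ^ m) n = T Q2 (qvar ^ m'') (Suc n) + qvar ^ m'' * T Q2 (qvar ^ m'') n"
        unfolding qm using T_rec1[of Q2 "qvar ^ m''" n] by (metis diff_add_cancel)
      moreover have "DD n dvd T Q2 (qvar ^ m'') (Suc n)"
        using m by (intro dvd_trans[OF DD_mono less.IH]) simp
      moreover have "DD n dvd T Q2 (qvar ^ m'') n"
        using less.IH[of m'' n] m by simp
      ultimately show ?thesis by simp
    qed
  qed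
qed

theorem corollary2p3:
  fixes m n :: nat
  shows "qpoch qvar (qvar ^ 2) ((n + 1) div 2) dvd
           (\<Sum>j\<le>n. (-1) ^ j * qvar ^ (m * j) * qbinom2 n j)"
proof -
  have "(\<Sum>j\<le>n. (-1) ^ j * qvar ^ (m * j) * qbinom2 n j) = T Q2 (qvar ^ m) n"
    unfolding T_def by (intro sum.cong refl) (simp add: qbinom2_gb power_mult)
  then show ?thesis using main[of n m] unfolding DD_def by simp
qed

end
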